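(* Let $\mathcal{A}$ be a finite set of players and $\mathcal{R}$ a finite set of resources. Each player $i\in\mathcal{A}$ has a finite set $\Gamma_i$ of strategies (trajectories), and each $\gamma_i\in\Gamma_i$ determines a set $\gamma_i^{\mathrm{cg}}\subseteq\mathcal{R}$ of used resources. For a joint strategy $\gamma=(\gamma_i)_{i\in\mathcal{A}}\in\Gamma=\prod_i\Gamma_i$, the load of $r\in\mathcal{R}$ is $l_r(\gamma)=\sum_{i\in\mathcal{A}}\mathbf{1}[r\in\gamma_i^{\mathrm{cg}}]$. Each resource $r$ has a cost function $J_r:\mathbb{N}\to\mathbb{R}$ which is a polynomial with non-negative coefficients and degree at most $d\in\mathbb{N}$. Player $i$'s cost is $J_i(\gamma)=J_i^{\mathrm{cg}}(\gamma)+J_i^{\mathrm{per}}(\gamma_i)$, where $J_i^{\mathrm{cg}}(\gamma)=\sum_{r\in\gamma_i^{\mathrm{cg}}}J_r(l_r(\gamma))$ and $J_i^{\mathrm{per}}:\Gamma_i\to\mathbb{R}_{\ge 0}$ is a personal cost depending only on $\gamma_i$. Let $C(\gamma)=\sum_{i}J_i(\gamma)$, let $\Gamma_{\mathrm{NE}}$ be the set of pure Nash equilibria, $\Gamma^\star=\arg\min_{\gamma\in\Gamma}C(\gamma)$, and $\mathrm{PoA}=\max_{\gamma\in\Gamma_{\mathrm{NE}}}C(\gamma)/\min_{\gamma\in\Gamma}C(\gamma)$. Let $\alpha^\star\in\mathbb{R}_{\ge0}$ be the largest constant such that $J_i^{\mathrm{per}}(\gamma_i)\ge\alpha^\star J_i^{\mathrm{cg}}(\gamma)$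 for all $i\in\mathcal{A}$ and all $\gamma\in\Gamma_{\mathrm{NE}}\cup\Gamma^\star$. Let $\Psi_{d,\alpha^\star}$ be the positive real solution of $x^{d+1}+\alpha^\star x^{d+1}=(x+1)^d+\alpha^\star$ and $k=\lfloor\Psi_{d,\alpha^\star}\rfloor$. Then $$\mathrm{PoA}\le\frac{(k+1)^{2d+1}-k^{d+1}(k+2)^d+\alpha^\star\left((k+1)^{d+1}-k^{d+1}\right)}{(1+\alpha^\star)\left((k+1)^{d+1}-k^{d+1}\right)-(k+2)^d+(k+1)^d}.$$
   Context: This models urban driving games as congestion games: resources are cells of a discretization of the road in space, time and "proximity levels", and a trajectory uses the resources corresponding to its (inflated) spatio-temporal occupancy. Costs are assumed positive (non-negative). A pure Nash equilibrium is a $\gamma$ with $J_i(\gamma)\le J_i(\gamma_i',\gamma_{-i})$ for all $i$ and all $\gamma_i'\in\Gamma_i$. *)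

theory Defs
  imports "HOL-Library.FuncSet" "HOL-Computational_Algebra.Polynomial"
begin

text \<open>Congestion game: players A, strategy sets Gam i, used resources use i s,
  resource costs cost r (real polynomials evaluated at the load), personal costs per i s.
  Joint strategies are the extensional functions in PiE A Gam.\<close>

definition load :: "'a set \<Rightarrow> ('a \<Rightarrow> 'b \<Rightarrow> 'r set) \<Rightarrow> ('a \<Rightarrow> 'b) \<Rightarrow> 'r \<Rightarrow> nat" where
  "load A use g r = card {i \<in> A. r \<in> use i (g i)}"

definition Jcg :: "'a set \<Rightarrow> ('a \<Rightarrow> 'b \<Rightarrow> 'r set) \<Rightarrow> ('r \<Rightarrow> real poly)
    \<Rightarrow> 'a \<Rightarrow> ('a \<Rightarrow> 'b) \<Rightarrow> real" where
  "Jcg A use cost i g = (\<Sum>r\<in>use i (g i). poly (cost r) (real (load A use g r)))"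

definition Jplayer :: "'a set \<Rightarrow> ('a \<Rightarrow> 'b \<Rightarrow> 'r set) \<Rightarrow> ('r \<Rightarrow> real poly)
    \<Rightarrow> ('a \<Rightarrow> 'b \<Rightarrow> real) \<Rightarrow> 'a \<Rightarrow> ('a \<Rightarrow> 'b) \<Rightarrow> real" where
  "Jplayer A use cost per i g = Jcg A use cost i g + per i (g i)"

definition social_cost :: "'a set \<Rightarrow> ('a \<Rightarrow> 'b \<Rightarrow> 'r set) \<Rightarrow> ('r \<Rightarrow> real poly)
    \<Rightarrow> ('a \<Rightarrow> 'b \<Rightarrow> real) \<Rightarrow> ('a \<Rightarrow> 'b) \<Rightarrow> real" where
  "social_cost A use cost per g = (\<Sum>i\<in>A. Jplayer A use cost per i g)"

definition is_pure_NE :: "'a set \<Rightarrow> ('a \<Rightarrow> 'b set) \<Rightarrow> ('a \<Rightarrow> 'b \<Rightarrow> 'r set) \<Rightarrow> ('r \<Rightarrow> real poly)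
    \<Rightarrow> ('a \<Rightarrow> 'b \<Rightarrow> real) \<Rightarrow> ('a \<Rightarrow> 'b) \<Rightarrow> bool" where
  "is_pure_NE A Gam use cost per g \<longleftrightarrow> g \<in> PiE A Gam \<and>
     (\<forall>i\<in>A. \<forall>s\<in>Gam i. Jplayer A use cost per i g \<le> Jplayer A use cost per i (g(i := s)))"

definition is_social_opt :: "'a set \<Rightarrow> ('a \<Rightarrow> 'b set) \<Rightarrow> ('a \<Rightarrow> 'b \<Rightarrow> 'r set) \<Rightarrow> ('r \<Rightarrow> real poly)
    \<Rightarrow> ('a \<Rightarrow> 'b \<Rightarrow> real) \<Rightarrow> ('a \<Rightarrow> 'b) \<Rightarrow> bool" where
  "is_social_opt A Gam use cost per g \<longleftrightarrow> g \<in> PiE A Gam \<and>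
     (\<forall>g'\<in>PiE A Gam. social_cost A use cost per g \<le> social_cost A use cost per g')"

definition alpha_ok :: "'a set \<Rightarrow> ('a \<Rightarrow> 'b set) \<Rightarrow> ('a \<Rightarrow> 'b \<Rightarrow> 'r set) \<Rightarrow> ('r \<Rightarrow> real poly)
    \<Rightarrow> ('a \<Rightarrow> 'b \<Rightarrow> real) \<Rightarrow> real \<Rightarrow> bool" where
  "alpha_ok A Gam use cost per a \<longleftrightarrow> a \<ge> 0 \<and>
     (\<forall>g. is_pure_NE A Gam use cost per g \<or> is_social_opt A Gam use cost per g \<longrightarrow>
        (\<forall>i\<in>A. per i (g i) \<ge> a * Jcg A use cost i g))"

definition poa_bound :: "nat \<Rightarrow> real \<Rightarrow> nat \<Rightarrow> real" where
  "poa_bound d a k =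
    (real (k+1)^(2*d+1) - real k^(d+1) * real (k+2)^d + a * (real (k+1)^(d+1) - real k^(d+1)))
    / ((1 + a) * (real (k+1)^(d+1) - real k^(d+1)) - real (k+2)^d + real (k+1)^d)"

end

theory Submission
  imports Defs
begin


definition EE :: "nat \<Rightarrow> real \<Rightarrow> real" where "EE d x = (x+2)^d - (x+1)^d"
definition DD :: "nat \<Rightarrow> real \<Rightarrow> real" where "DD d x = (x+1)^(d+1) - x^(d+1)"

lemma DD_pos: "x \<ge> 0 \<Longrightarrow> DD d x > 0"
proof -
  assume "x \<ge> 0"
  then have "x^(d+1) < (x+1)^(d+1)" by (intro power_strict_mono) auto
  then show ?thesis unfolding DD_def by simp
qed

lemma EE_nonneg: "x \<ge> 0 \<Longrightarrow> EE d x \<ge> 0"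
  unfolding EE_def by (simp add: power_mono)

lemma mvt_step:
  assumes "d \<ge> 1" "x \<ge> 0"
  shows "\<exists>c. x < c \<and> c < x + 1 \<and> EE d x * (real (d+1) * c^d) = DD d x * (real d * (c+1)^(d-1))"
proof -
  have "\<exists>c. x < c \<and> c < x + 1 \<and>
     ((\<lambda>t. (t+1)^d) (x+1) - (\<lambda>t. (t+1)^d) x) * (\<lambda>t. real (d+1) * t^d) c
     = ((\<lambda>t::real. t^(d+1)) (x+1) - (\<lambda>t. t^(d+1)) x) * (\<lambda>t. real d * (t+1)^(d-1)) c"
  proof (rule GMVT')
    fix z :: real
    show "DERIV (\<lambda>t. t^(d+1)) z :> real (d+1) * z^d" using DERIV_pow[of "d+1" z] by simp
    show "DERIV (\<lambda>t. (t+1)^d) z :> real d * (z+1)^(d-1)"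
      by (auto intro!: derivative_eq_intros)
  qed (auto intro!: continuous_intros)
  then show ?thesis unfolding EE_def DD_def by (simp add: add.assoc)
qed

lemma ratio_mono:
  assumes "0 \<le> n" "n + 1 \<le> m"
  shows "EE d m * DD d n \<le> EE d n * DD d m"
proof (cases "d = 0")
  case True then show ?thesis by (simp add: EE_def)
next
  case False
  then have d1: "d \<ge> 1" by simp
  obtain xi where xi: "n < xi" "xi < n + 1"
    "EE d n * (real (d+1) * xi^d) = DD d n * (real d * (xi+1)^(d-1))"
    using mvt_step[OF d1 assms(1)] by blast
  obtain eta where eta: "m < eta" "eta < m + 1"
    "EE d m * (real (d+1) * eta^d) = DD d m * (real d * (eta+1)^(d-1))"
    using mvt_step[OF d1, of m] assms by auto
  have xpos: "xi > 0" using xi assms by simp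
  have lt: "xi < eta" using xi eta assms by simp
  have Dn: "DD d n > 0" using DD_pos assms by simp
  have Dm: "DD d m > 0" using DD_pos assms by simp
  have key: "(eta+1)^(d-1) * xi^d \<le> (xi+1)^(d-1) * eta^d"
  proof -
    have "((eta+1)*xi)^(d-1) \<le> ((xi+1)*eta)^(d-1)"
      by (rule power_mono) (use lt xpos in \<open>auto simp: algebra_simps\<close>)
    then have "((eta+1)*xi)^(d-1) * xi \<le> ((xi+1)*eta)^(d-1) * eta"
      by (rule mult_mono) (use lt xpos in auto)
    moreover have "xi^d = xi^(d-1) * xi" "eta^d = eta^(d-1)*eta"
      using d1 by (metis One_nat_def Suc_pred' power_Suc2 less_le_trans zero_less_one)+
    ultimately show ?thesis by (simp add: power_mult_distrib mult_ac)
  qed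
  define P where "P = real (d+1)"
  have P: "P > 0" unfolding P_def by simp
  have "EE d m * DD d n * (P * eta^d) * (P * xi^d) = DD d m * (real d * (eta+1)^(d-1)) * DD d n * (P * xi^d)"
    using eta(3) unfolding P_def by (simp add: mult_ac)
  also have "\<dots> = DD d m * DD d n * real d * P * ((eta+1)^(d-1) * xi^d)" by (simp add: mult_ac)
  also have "\<dots> \<le> DD d m * DD d n * real d * P * ((xi+1)^(d-1) * eta^d)"
    using key Dn Dm P by (intro mult_left_mono) auto
  also have "\<dots> = DD d m * (DD d n * (real d * (xi+1)^(d-1))) * (P * eta^d)" by (simp add: mult_ac)
  also have "\<dots> = EE d n * DD d m * (P * eta^d) * (P * xi^d)"
    using xi(3) unfolding P_def by (simp add: mult_ac)
  finally have "EE d m * DD d n * (P * eta^d * (P * xi^d)) \<le> EE d n * DD d m * (P * eta^d * (P * xi^d))"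
    by (simp add: mult_ac)
  moreover have "P * eta^d * (P * xi^d) > 0" using P xpos lt by simp
  ultimately show ?thesis using mult_le_cancel_right_pos by blast
qed

lemma ratio_mono_nat:
  assumes "k \<le> n"
  shows "EE d (real n) * DD d (real k) \<le> EE d (real k) * DD d (real n)"
proof (cases "k = n")
  case True then show ?thesis by simp
next
  case False
  then have "real k + 1 \<le> real n" using assms by simp
  then show ?thesis using ratio_mono[of "real k" "real n" d] by simp
qed

definition HH :: "nat \<Rightarrow> nat \<Rightarrow> real \<Rightarrow> real" where
  "HH d k x = EE d (real k) * x^(d+1) - DD d (real k) * (x+1)^d"

lemma HH_step: "HH d k (x+1) - HH d k x = EE d (real k) * DD d x - DD d (real k) * EE d x"
  unfolding HH_def EE_def DD_def by (simp add: algebra_simps add.assoc)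

lemma HH_min: "HH d k (real n) \<ge> HH d k (real k)"
proof (cases "k \<le> n")
  case True
  show ?thesis using True
  proof (induction n rule: dec_induct)
    case base then show ?case by simp
  next
    case (step m)
    have "EE d (real m) * DD d (real k) \<le> EE d (real k) * DD d (real m)"
      using ratio_mono_nat step by simp
    then have "HH d k (real m + 1) \<ge> HH d k (real m)" using HH_step[of d k "real m"]
      by (simp add: mult_ac)
    then show ?case using step.IH by (metis of_nat_Suc add.commute order_trans)
  qed
next
  case False
  then have "n \<le> k" by simp
  then show ?thesis
  proof (induction n rule: inc_induct)
    case base then show ?case by simp
  next
    case (step m)
    have "real m + 1 \<le> real k" using step by simp
    then have "EE d (real k) * DD d (real m) \<le> EE d (real m) * DD d (real k)"
      using ratio_mono[of "real m" "real k" d] by simp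
    then have "HH d k (real m + 1) \<le> HH d k (real m)" using HH_step[of d k "real m"]
      by (simp add: mult_ac)
    then show ?case using step.IH by (metis of_nat_Suc add.commute order_trans)
  qed
qed

definition lamb :: "nat \<Rightarrow> nat \<Rightarrow> real" where
  "lamb d k = (real (k+1)^(2*d+1) - real k^(d+1) * real (k+2)^d) / DD d (real k)"
definition muu :: "nat \<Rightarrow> nat \<Rightarrow> real" where
  "muu d k = EE d (real k) / DD d (real k)"

lemma lamb_eq: "lamb d k * DD d (real k) = - HH d k (real k)"
proof -
  have D: "DD d (real k) > 0" using DD_pos by simp
  have e: "2*d+1 = Suc (d+d)" by simp
  have 1: "lamb d k * DD d (real k) = real (k+1)^(2*d+1) - real k^(d+1) * real (k+2)^d"
    unfolding lamb_def using D by simp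
  have 2: "real (k+1)^(2*d+1) - real k^(d+1) * real (k+2)^d = - HH d k (real k)"
    unfolding HH_def EE_def DD_def e power_Suc power_add
    by (simp add: algebra_simps)
  show ?thesis using 1 2 by simp
qed

lemma muu_nonneg: "muu d k \<ge> 0"
  unfolding muu_def using DD_pos[of "real k" d] EE_nonneg[of "real k" d] by simp

lemma S1: "(real n + 1)^d \<le> lamb d k + muu d k * real n^(d+1)"
proof -
  have D: "DD d (real k) > 0" using DD_pos by simp
  have "DD d (real k) * (real n + 1)^d \<le> DD d (real k) * (lamb d k + muu d k * real n^(d+1))"
    using HH_min[of d k n] lamb_eq[of d k] D unfolding HH_def muu_def
    by (simp add: algebra_simps)
  then show ?thesis using D by simp
qed

lemma lamb_ge1: "lamb d k \<ge> 1"
  using S1[where n=0 and d=d and k=k] by simp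

lemma S2:
  assumes "j \<le> d"
  shows "(real n + 1)^j \<le> lamb d k + muu d k * real n^(j+1)"
proof (cases "n = 0")
  case True then show ?thesis using lamb_ge1[of d k] by simp
next
  case False
  then have n1: "real n \<ge> 1" by simp
  have L: "lamb d k \<ge> 0" using lamb_ge1[of d k] by simp
  have e: "real n ^ (d - j) \<ge> 1" using one_le_power[OF n1] by simp
  have "real n^(d-j) * (real n + 1)^j \<le> (real n + 1)^(d-j) * (real n + 1)^j"
    by (intro mult_right_mono power_mono) auto
  also have "\<dots> = (real n + 1)^d" using assms by (simp add: power_add[symmetric])
  also have "\<dots> \<le> lamb d k + muu d k * real n^(d+1)" by (rule S1)
  also have "\<dots> \<le> lamb d k * real n^(d-j) + muu d k * real n^(d+1)"
    using L e by (simp add: mult_left_mono[of 1 _ "lamb d k", simplified])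
  also have "\<dots> = real n^(d-j) * (lamb d k + muu d k * real n^(j+1))"
    using assms by (simp add: algebra_simps power_add[symmetric])
  finally have "real n^(d-j) * (real n + 1)^j \<le> real n^(d-j) * (lamb d k + muu d k * real n^(j+1))" .
  moreover have "real n^(d-j) > 0" using e by linarith
  ultimately show ?thesis using mult_le_cancel_left_pos by blast
qed

lemma S3:
  assumes "j \<le> d"
  shows "real y * (real x + 1)^j \<le> lamb d k * real y^(j+1) + muu d k * real x^(j+1)"
proof (cases "y = 0")
  case True then show ?thesis using muu_nonneg[of d k] by simp
next
  case False
  define q where "q = x div y"
  have h1: "x + 1 \<le> (q+1) * y" unfolding q_def using False
    by (metis Suc_eq_plus1 Suc_leI div_mult_mod_eq le_neq_implies_less add_le_cancel_left
        mod_less_divisor neq0_conv add.commute distrib_right mult_1 linorder_not_le)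
  have h2: "q * y \<le> x" unfolding q_def by (simp add: div_times_less_eq_dividend)
  have r1: "real x + 1 \<le> (real q + 1) * real y" using h1
    by (metis of_nat_1 of_nat_add of_nat_le_iff of_nat_mult)
  have r2: "real q * real y \<le> real x" using h2 by (metis of_nat_le_iff of_nat_mult)
  have "real y * (real x + 1)^j \<le> real y * ((real q + 1) * real y)^j"
    using r1 by (intro mult_left_mono power_mono) auto
  also have "\<dots> = real y^(j+1) * (real q + 1)^j" by (simp add: power_mult_distrib mult_ac)
  also have "\<dots> \<le> real y^(j+1) * (lamb d k + muu d k * real q^(j+1))"
    using S2[OF assms, of q k] by (intro mult_left_mono) auto
  also have "\<dots> = lamb d k * real y^(j+1) + muu d k * (real q * real y)^(j+1)"
    by (simp add: algebra_simps power_mult_distrib)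
  also have "\<dots> \<le> lamb d k * real y^(j+1) + muu d k * real x^(j+1)"
    using r2 muu_nonneg[of d k] by (intro add_left_mono mult_left_mono power_mono) auto
  finally show ?thesis .
qed

lemma poly_smooth:
  assumes "\<And>n. coeff p n \<ge> 0" "degree p \<le> d"
  shows "real y * poly p (real x + 1) \<le> lamb d k * (real y * poly p (real y)) + muu d k * (real x * poly p (real x))"
proof -
  have "real y * poly p (real x + 1) = (\<Sum>i\<le>degree p. coeff p i * (real y * (real x + 1)^i))"
    by (simp add: poly_altdef sum_distrib_left mult_ac)
  also have "\<dots> \<le> (\<Sum>i\<le>degree p. coeff p i * (lamb d k * real y^(i+1) + muu d k * real x^(i+1)))"
    using assms S3 by (intro sum_mono mult_left_mono) auto
  also have "\<dots> = lamb d k * (real y * poly p (real y)) + muu d k * (real x * poly p (real x))"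
    by (simp add: poly_altdef sum_distrib_left sum.distrib algebra_simps)
  finally show ?thesis .
qed

lemma poly_mono_nonneg:
  assumes "\<And>n. coeff p n \<ge> 0" "0 \<le> x" "x \<le> (y::real)"
  shows "poly p x \<le> poly p y"
  unfolding poly_altdef using assms by (intro sum_mono mult_left_mono power_mono) auto

lemma poly_nonneg':
  assumes "\<And>n. coeff p n \<ge> 0" "0 \<le> (x::real)"
  shows "0 \<le> poly p x"
  unfolding poly_altdef using assms by (intro sum_nonneg mult_nonneg_nonneg) auto

lemma denom_pos:
  fixes a psi :: real
  assumes "a \<ge> 0" "psi > 0" "psi^(d+1) + a * psi^(d+1) = (psi + 1)^d + a"
    and k: "k = nat \<lfloor>psi\<rfloor>"
  shows "(1 + a) * DD d (real k) - EE d (real k) > 0"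
proof -
  have kle: "real k \<le> psi" using k assms(2) by linarith
  have klt: "psi < real k + 1" using k assms(2) by linarith
  define m where "m = real k + 1"
  have eq: "(1+a) * psi^(d+1) = (psi+1)^d + a" using assms(3) by (simp add: algebra_simps)
  have F1: "(1+a) * real k^(d+1) \<le> (real k + 1)^d + a"
  proof (cases "k = 0")
    case True then show ?thesis using assms by simp
  next
    case False
    then have kp: "real k > 0" by simp
    have "real k * (psi+1) \<le> (real k + 1) * psi" using kle by (simp add: algebra_simps)
    moreover have "0 \<le> real k * (psi+1)" using kp assms(2) by (intro mult_nonneg_nonneg) auto
    ultimately have "(real k * (psi+1))^d \<le> ((real k + 1) * psi)^d"
      by (intro power_mono)
    then have "(real k * (psi+1))^d * real k \<le> ((real k + 1) * psi)^d * psi"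
      by (rule mult_mono) (use kp kle in auto)
    then have A: "real k^(d+1) * (psi+1)^d \<le> (real k + 1)^d * psi^(d+1)"
      by (simp add: power_mult_distrib mult_ac)
    have B: "a * real k^(d+1) \<le> a * psi^(d+1)"
      using kle kp assms(1) by (intro mult_left_mono power_mono) auto
    have "(1+a) * real k^(d+1) * psi^(d+1) = real k^(d+1) * ((psi + 1)^d + a)"
      by (metis eq mult.assoc mult.commute)
    also have "\<dots> \<le> ((real k + 1)^d + a) * psi^(d+1)" using A B by (simp add: algebra_simps)
    finally have "(1+a) * real k^(d+1) * psi^(d+1) \<le> ((real k + 1)^d + a) * psi^(d+1)" .
    moreover have "psi^(d+1) > 0" using assms(2) by simp
    ultimately show ?thesis using mult_le_cancel_right_pos by blast
  qed
  have F2: "(1+a) * m^(d+1) > (m + 1)^d + a"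
  proof -
    have mp: "m > 0" unfolding m_def by simp
    have "psi * (m+1) < m * (psi + 1)" using klt unfolding m_def by (simp add: algebra_simps)
    moreover have "0 \<le> psi * (m+1)" using mp assms(2) by (intro mult_nonneg_nonneg) auto
    ultimately have "(psi * (m+1))^d \<le> (m * (psi+1))^d"
      by (intro power_mono) auto
    then have "(psi * (m+1))^d * psi \<le> (m * (psi+1))^d * psi"
      using assms(2) by simp
    also have "\<dots> < (m * (psi+1))^d * m"
      using klt mp assms(2) unfolding m_def by (intro mult_strict_left_mono) auto
    finally have A: "psi^(d+1) * (m+1)^d < m^(d+1) * (psi+1)^d"
      by (simp add: power_mult_distrib mult_ac)
    have B: "a * psi^(d+1) \<le> a * m^(d+1)"
      using klt assms(1,2) unfolding m_def by (intro mult_left_mono power_mono) auto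
    have "((m + 1)^d + a) * psi^(d+1) < m^(d+1) * ((psi + 1)^d + a)"
      using A B by (simp add: algebra_simps)
    also have "\<dots> = (1+a) * m^(d+1) * psi^(d+1)"
      by (metis eq mult.assoc mult.commute)
    finally have "((m + 1)^d + a) * psi^(d+1) < (1+a) * m^(d+1) * psi^(d+1)" .
    moreover have "psi^(d+1) > 0" using assms(2) by simp
    ultimately show ?thesis using mult_less_cancel_right_pos by blast
  qed
  have "(1 + a) * DD d (real k) - EE d (real k)
      = ((1+a) * m^(d+1) - (m + 1)^d - a) - ((1+a) * real k^(d+1) - (real k + 1)^d - a)"
    unfolding DD_def EE_def m_def by (simp add: algebra_simps)
  then show ?thesis using F1 F2 by linarith
qed

lemma poa_eq:
  assumes "(1 + a) * DD d (real k) - EE d (real k) > 0"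
  shows "poa_bound d a k = (lamb d k + a) / (1 + a - muu d k)"
proof -
  define D where "D = DD d (real k)"
  define E where "E = EE d (real k)"
  define N where "N = real (k+1)^(2*d+1) - real k^(d+1) * real (k+2)^d"
  have D: "D > 0" unfolding D_def using DD_pos by simp
  have 1: "(lamb d k + a) * D = N + a * D" unfolding lamb_def N_def D_def[symmetric] using D
    by (simp add: field_simps)
  have 2: "(1 + a - muu d k) * D = (1+a) * D - E" unfolding muu_def D_def[symmetric] E_def[symmetric]
    using D by (simp add: field_simps)
  have 3: "poa_bound d a k = (N + a * D) / ((1+a) * D - E)"
    unfolding poa_bound_def N_def D_def E_def DD_def EE_def by (simp add: algebra_simps)
  have "(lamb d k + a) / (1 + a - muu d k) = ((lamb d k + a) * D) / ((1 + a - muu d k) * D)"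
    using D by simp
  then show ?thesis using 1 2 3 by simp
qed



lemma sum_exchange:
  assumes "finite A" "finite R" "\<And>i. i \<in> A \<Longrightarrow> use i (h i) \<subseteq> R"
  shows "(\<Sum>i\<in>A. \<Sum>r\<in>use i (h i). F r) = (\<Sum>r\<in>R. real (load A use h r) * (F r :: real))"
proof -
  have "(\<Sum>i\<in>A. \<Sum>r\<in>use i (h i). F r) = (\<Sum>i\<in>A. \<Sum>r\<in>R. if r \<in> use i (h i) then F r else 0)"
  proof (rule sum.cong[OF refl])
    fix i assume i: "i \<in> A"
    have "(\<Sum>r\<in>R. if r \<in> use i (h i) then F r else 0) = (\<Sum>r\<in>R \<inter> use i (h i). F r)"
      using assms(2) by (simp add: sum.inter_restrict)
    also have "R \<inter> use i (h i) = use i (h i)" using assms(3)[OF i] by blast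
    finally show "(\<Sum>r\<in>use i (h i). F r) = (\<Sum>r\<in>R. if r \<in> use i (h i) then F r else 0)" by simp
  qed
  also have "\<dots> = (\<Sum>r\<in>R. \<Sum>i\<in>A. if r \<in> use i (h i) then F r else 0)" by (rule sum.swap)
  also have "\<dots> = (\<Sum>r\<in>R. real (load A use h r) * F r)"
  proof (rule sum.cong[OF refl])
    fix r
    have "(\<Sum>i\<in>A. if r \<in> use i (h i) then F r else 0) = (\<Sum>i\<in>{i\<in>A. r \<in> use i (h i)}. F r)"
      using sum.inter_filter[OF assms(1), of "\<lambda>_. F r" "\<lambda>i. r \<in> use i (h i)"] by simp
    also have "\<dots> = real (load A use h r) * F r" unfolding load_def by simp
    finally show "(\<Sum>i\<in>A. if r \<in> use i (h i) then F r else 0) = real (load A use h r) * F r" .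
  qed
  finally show ?thesis .
qed

lemma load_upd:
  assumes "finite A"
  shows "load A use (g(i := s)) r \<le> load A use g r + 1"
proof -
  have "{j\<in>A. r \<in> use j ((g(i := s)) j)} \<subseteq> insert i {j\<in>A. r \<in> use j (g j)}" by auto
  then have "card {j\<in>A. r \<in> use j ((g(i := s)) j)} \<le> card (insert i {j\<in>A. r \<in> use j (g j)})"
    using assms by (intro card_mono) auto
  also have "\<dots> \<le> card {j\<in>A. r \<in> use j (g j)} + 1" using assms by (simp add: card_insert_if)
  finally show ?thesis unfolding load_def .
qed

lemma ex_min_fin:
  fixes f :: "'x \<Rightarrow> real"
  assumes "finite S" "S \<noteq> {}"
  shows "\<exists>x\<in>S. \<forall>y\<in>S. f x \<le> f y"
proof -
  have "Min (f ` S) \<in> f ` S" using assms by simp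
  then obtain x where "x \<in> S" "f x = Min (f ` S)" by auto
  moreover have "\<forall>y\<in>S. f x \<le> f y" using assms \<open>f x = Min (f ` S)\<close> by (auto intro: Min_le)
  ultimately show ?thesis by blast
qed

theorem theorem1:
  fixes A :: "'a set" and R :: "'r set" and Gam :: "'a \<Rightarrow> 'b set"
    and use :: "'a \<Rightarrow> 'b \<Rightarrow> 'r set" and cost :: "'r \<Rightarrow> real poly"
    and per :: "'a \<Rightarrow> 'b \<Rightarrow> real" and d :: nat and astar psi :: real
  assumes "finite A" and "finite R"
    and "\<And>i. i \<in> A \<Longrightarrow> finite (Gam i)"
    and "\<And>i s. i \<in> A \<Longrightarrow> s \<in> Gam i \<Longrightarrow> use i s \<subseteq> R"
    and "\<And>r n. r \<in> R \<Longrightarrow> coeff (cost r) n \<ge> 0"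
    and "\<And>r. r \<in> R \<Longrightarrow> degree (cost r) \<le> d"
    and "\<And>i s. i \<in> A \<Longrightarrow> s \<in> Gam i \<Longrightarrow> per i s \<ge> 0"
    and "alpha_ok A Gam use cost per astar"
    and "\<And>a. alpha_ok A Gam use cost per a \<Longrightarrow> a \<le> astar"
    and "psi > 0"
    and "psi^(d+1) + astar * psi^(d+1) = (psi + 1)^d + astar"
  shows "\<forall>g g'. is_pure_NE A Gam use cost per g \<and> g' \<in> PiE A Gam \<longrightarrow>
           social_cost A use cost per g
             \<le> poa_bound d astar (nat \<lfloor>psi\<rfloor>) * social_cost A use cost per g'"
proof (intro allI impI)
  fix g g' assume H: "is_pure_NE A Gam use cost per g \<and> g' \<in> PiE A Gam"
  note fA = assms(1) and fR = assms(2) and fG = assms(3) and useR = assms(4)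
    and cnn = assms(5) and deg = assms(6)
  have gP: "g \<in> PiE A Gam" and NE: "\<And>i s. i \<in> A \<Longrightarrow> s \<in> Gam i \<Longrightarrow>
      Jplayer A use cost per i g \<le> Jplayer A use cost per i (g(i := s))"
    using H unfolding is_pure_NE_def by auto
  have g'P: "g' \<in> PiE A Gam" using H by simp
  have finP: "finite (PiE A Gam)" using fA fG by (intro finite_PiE) auto
  obtain gs where oP: "gs \<in> PiE A Gam" and omin: "\<forall>y\<in>PiE A Gam.
      social_cost A use cost per gs \<le> social_cost A use cost per y"
    using ex_min_fin[OF finP, of "social_cost A use cost per"] gP by blast
  have opt: "is_social_opt A Gam use cost per gs" unfolding is_social_opt_def using oP omin by blast
  define a where "a = astar"
  define k where "k = nat \<lfloor>psi\<rfloor>"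
  define lam where "lam = lamb d k"
  define mu where "mu = muu d k"
  have a0: "a \<ge> 0" and alg: "\<And>i. i \<in> A \<Longrightarrow> per i (g i) \<ge> a * Jcg A use cost i g"
    and alo: "\<And>i. i \<in> A \<Longrightarrow> per i (gs i) \<ge> a * Jcg A use cost i gs"
    using assms(8) H opt unfolding alpha_ok_def a_def by auto
  have den: "(1 + a) * DD d (real k) - EE d (real k) > 0"
    using denom_pos[of a psi d k] a0 assms(10,11) unfolding a_def k_def by simp
  have Dp: "DD d (real k) > 0" using DD_pos by simp
  have den2: "1 + a - mu > 0"
  proof -
    have "(1 + a - mu) * DD d (real k) = (1 + a) * DD d (real k) - EE d (real k)"
      unfolding mu_def muu_def using Dp by (simp add: field_simps)
    then show ?thesis using den Dp by (metis zero_less_mult_pos2)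
  qed
  have lam1: "lam \<ge> 1" unfolding lam_def by (rule lamb_ge1)
  have mu0: "mu \<ge> 0" unfolding mu_def by (rule muu_nonneg)
  have useg: "\<And>i. i \<in> A \<Longrightarrow> use i (g i) \<subseteq> R" using gP useR by (auto simp: PiE_def Pi_def)
  have useo: "\<And>i. i \<in> A \<Longrightarrow> use i (gs i) \<subseteq> R" using oP useR by (auto simp: PiE_def Pi_def)
  define X where "X = (\<Sum>i\<in>A. Jcg A use cost i g)"
  define Y where "Y = (\<Sum>i\<in>A. per i (g i))"
  define U where "U = (\<Sum>i\<in>A. Jcg A use cost i gs)"
  define V where "V = (\<Sum>i\<in>A. per i (gs i))"
  have Cg: "social_cost A use cost per g = X + Y"
    unfolding social_cost_def Jplayer_def X_def Y_def by (simp add: sum.distrib)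
  have Co: "social_cost A use cost per gs = U + V"
    unfolding social_cost_def Jplayer_def U_def V_def by (simp add: sum.distrib)
  have Xeq: "X = (\<Sum>r\<in>R. real (load A use g r) * poly (cost r) (real (load A use g r)))"
    unfolding X_def Jcg_def by (rule sum_exchange[where h=g and use=use, OF fA fR useg])
  have Ueq: "U = (\<Sum>r\<in>R. real (load A use gs r) * poly (cost r) (real (load A use gs r)))"
    unfolding U_def Jcg_def by (rule sum_exchange[where h=gs and use=use, OF fA fR useo])
  have YX: "Y \<ge> a * X" unfolding X_def Y_def sum_distrib_left using alg by (intro sum_mono) auto
  have VU: "V \<ge> a * U" unfolding U_def V_def sum_distrib_left using alo by (intro sum_mono) auto
  have dev: "Jplayer A use cost per i g \<le> (\<Sum>r\<in>use i (gs i). poly (cost r) (real (load A use g r) + 1)) + per i (gs i)"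
    if i: "i \<in> A" for i
  proof -
    have oi: "gs i \<in> Gam i" using oP i by (auto simp: PiE_def Pi_def)
    have "Jplayer A use cost per i g \<le> Jplayer A use cost per i (g(i := gs i))" using NE[OF i oi] .
    also have "\<dots> = (\<Sum>r\<in>use i (gs i). poly (cost r) (real (load A use (g(i := gs i)) r))) + per i (gs i)"
      unfolding Jplayer_def Jcg_def by simp
    also have "\<dots> \<le> (\<Sum>r\<in>use i (gs i). poly (cost r) (real (load A use g r) + 1)) + per i (gs i)"
    proof -
      have "(\<Sum>r\<in>use i (gs i). poly (cost r) (real (load A use (g(i := gs i)) r)))
          \<le> (\<Sum>r\<in>use i (gs i). poly (cost r) (real (load A use g r) + 1))"
      proof (rule sum_mono)
        fix r assume r: "r \<in> use i (gs i)"
        then have rR: "r \<in> R" using useR[OF i oi] by blast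
        have "real (load A use (g(i := gs i)) r) \<le> real (load A use g r) + 1"
          using load_upd[OF fA, of use g i "gs i" r] by linarith
        then show "poly (cost r) (real (load A use (g(i := gs i)) r)) \<le> poly (cost r) (real (load A use g r) + 1)"
          by (intro poly_mono_nonneg) (use cnn[OF rR] in auto)
      qed
      then show ?thesis by simp
    qed
    finally show ?thesis .
  qed
  have step1: "X + Y \<le> (\<Sum>r\<in>R. real (load A use gs r) * poly (cost r) (real (load A use g r) + 1)) + V"
  proof -
    have "X + Y = (\<Sum>i\<in>A. Jplayer A use cost per i g)" using Cg unfolding social_cost_def by simp
    also have "\<dots> \<le> (\<Sum>i\<in>A. (\<Sum>r\<in>use i (gs i). poly (cost r) (real (load A use g r) + 1)) + per i (gs i))"
      using dev by (intro sum_mono) auto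
    also have "\<dots> = (\<Sum>i\<in>A. \<Sum>r\<in>use i (gs i). poly (cost r) (real (load A use g r) + 1)) + V"
      unfolding V_def by (simp add: sum.distrib)
    also have "(\<Sum>i\<in>A. \<Sum>r\<in>use i (gs i). poly (cost r) (real (load A use g r) + 1))
        = (\<Sum>r\<in>R. real (load A use gs r) * poly (cost r) (real (load A use g r) + 1))"
      by (rule sum_exchange[where h=gs and use=use, OF fA fR useo])
    finally show ?thesis .
  qed
  have step2: "(\<Sum>r\<in>R. real (load A use gs r) * poly (cost r) (real (load A use g r) + 1)) \<le> lam * U + mu * X"
  proof -
    have "(\<Sum>r\<in>R. real (load A use gs r) * poly (cost r) (real (load A use g r) + 1))
       \<le> (\<Sum>r\<in>R. lam * (real (load A use gs r) * poly (cost r) (real (load A use gs r)))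
             + mu * (real (load A use g r) * poly (cost r) (real (load A use g r))))"
      unfolding lam_def mu_def using cnn deg by (intro sum_mono poly_smooth) auto
    also have "\<dots> = lam * U + mu * X" unfolding Ueq Xeq by (simp add: sum.distrib sum_distrib_left)
    finally show ?thesis .
  qed
  have main: "(1 + a - mu) * (X + Y) \<le> (lam + a) * (U + V)"
  proof -
    have e: "(lam + a) * (U + V) - (1 + a - mu) * (X + Y)
        = (1 + a) * ((lam * U + mu * X + V) - (X + Y)) - mu * (a * X - Y) + (lam - 1) * (V - a * U)"
      by (simp add: algebra_simps)
    have t1: "(1 + a) * ((lam * U + mu * X + V) - (X + Y)) \<ge> 0"
      using step1 step2 a0 by (intro mult_nonneg_nonneg) auto
    have t2: "mu * (a * X - Y) \<le> 0" using mu0 YX by (intro mult_nonneg_nonpos) auto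
    have t3: "(lam - 1) * (V - a * U) \<ge> 0" using lam1 VU by (intro mult_nonneg_nonneg) auto
    show ?thesis using e t1 t2 t3 by linarith
  qed
  have pb: "poa_bound d astar (nat \<lfloor>psi\<rfloor>) = (lam + a) / (1 + a - mu)"
    using poa_eq[OF den] unfolding lam_def mu_def a_def k_def by simp
  have pb0: "(lam + a) / (1 + a - mu) \<ge> 0" using lam1 a0 den2 by simp
  have "social_cost A use cost per g \<le> (lam + a) / (1 + a - mu) * social_cost A use cost per gs"
    using main den2 Cg Co by (simp add: field_simps mult.commute)
  also have "\<dots> \<le> (lam + a) / (1 + a - mu) * social_cost A use cost per g'"
    using omin g'P pb0 by (intro mult_left_mono) auto
  finally show "social_cost A use cost per g
             \<le> poa_bound d astar (nat \<lfloor>psi\<rfloor>) * social_cost A use cost per g'" using pb by simp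
qed

end
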